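(* Assume the standing hypotheses (H) below and let $G=\mathcal P^{-1}(\Omega)$. Suppose that $\Omega$ acts freely on $C$ and that $G=\mathbb{Z}^p\rtimes\Omega$, i.e. there is a subgroup $\tilde\Omega\subset G$ such that $\mathcal P$ restricts to an isomorphism $\tilde\Omega\to\Omega$, with inverse $\iota:\Omega\to\tilde\Omega$. Then there exists a smooth map $s:C\to E^{p-q}$ such that, with the diffeomorphism $\varphi(a,x)=(a+s(x),x)$ of $\mathbb{R}^p\times C$, for every $\omega\in\Omega$ the map $\varphi^{-1}\circ\iota(\omega)\circ\varphi$ is of the form $(a,x)\mapsto(A_\omega a+c_\omega,\omega|_C(x))$ with $A_\omega$ the linear part of $\omega$ and $c_\omega\in E^q$ a constant vector.
   Context: Bundle automorphisms: fix integers $p\ge q\ge1$, a simply connected manifold $C$ and a decomposition $\mathbb{R}^p=E^q\oplus E^{p-q}$ with $\dim E^q=q$. An automorphism of the trivial bundle $\mathbb{R}^p\times C\to C$ is a map $(a,x)\mapsto(Aa+f(x),\varphi(x))$ with $A\in\mathrm{GL}_p(\mathbb{R})$ (linear part), $f\in C^\infty(C,\mathbb{R}^p)$ (translation part), $\varphi\in\mathrm{Diff}(C)$. $\mathrm{Aut}^{\mathbb{Z}}_{E^q}(\mathbb{R}^p\times C\to C)$ is the set of those with $A\in\mathrm{GL}_p(\mathbb{Z})$ and the projection of $f$ onto $E^q$ parallel to $E^{p-q}$ constant. An automorphism of the trivial bundle $(S^1)^p\times C\to C$, $(S^1)^p=\mathbb{R}^p/\mathbb{Z}^p$, is a map $(\bar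 a,x)\mapsto(A\bar a+\bar f(x),\varphi(x))$ with $A\in\mathrm{GL}_p(\mathbb{Z})$, $\bar f\in C^\infty(C,(S^1)^p)$, $\varphi\in\mathrm{Diff}(C)$; each lifts to an automorphism of $\mathbb{R}^p\times C\to C$, lifts differing by translations by $\mathbb{Z}^p$. $\mathrm{Aut}_{E^q}((S^1)^p\times C\to C)$ is the set of those whose lifts lie in $\mathrm{Aut}^{\mathbb{Z}}_{E^q}(\mathbb{R}^p\times C\to C)$, and $\mathcal P:\mathrm{Aut}^{\mathbb{Z}}_{E^q}(\mathbb{R}^p\times C\to C)\to\mathrm{Aut}_{E^q}((S^1)^p\times C\to C)$ is the reduction modulo $\mathbb{Z}^p$. The linear part and the restriction $\omega|_C=\varphi$ of $\omega\in\mathrm{Aut}_{E^q}((S^1)^p\times C\to C)$ are well defined. Standing hypotheses (H): $p\ge2$ and $\Omega$ is a discrete subgroup of $\mathrm{Aut}_{E^q}((S^1)^p\times C\to C)$ such that (i) the action of $\Omega$ on $C$ given by $\omega\mapsto\omega|_C$ is proper and cocompact; (ii) the linear part of every $\omega\in\Omega$ preserves $E^q$ and $E^{p-q}$; (iii) there is a scalar product $g_{E^q}$ on $E^q$ such that the restriction to $E^q$ of the linear part of every $\omega\in\Omega$ is a similarity of $g_{E^q}$, not all of them isometries; (iv) if $\omega\in\Omega\setminus\{\mathrm{id}\}$ and $\omega|_C(x)=x$ for some $x\in C$, then no element of $\mathcal P^{-1}(\omega)$ has a fixed point in $\mathbb{R}^p\times\{x\}$. *)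

theory Defs
  imports "HOL-Analysis.Analysis"
begin

fun Ck_on :: "nat \<Rightarrow> 'a::euclidean_space set \<Rightarrow> ('a \<Rightarrow> 'b::real_normed_vector) \<Rightarrow> bool" where
  "Ck_on 0 U f = continuous_on U f"
| "Ck_on (Suc k) U f =
     (\<exists>f'. (\<forall>x\<in>U. (f has_derivative f' x) (at x)) \<and> (\<forall>v. Ck_on k U (\<lambda>x. f' x v)))"

definition smooth_on :: "'a::euclidean_space set \<Rightarrow> ('a \<Rightarrow> 'b::real_normed_vector) \<Rightarrow> bool" where
  "smooth_on U f \<longleftrightarrow> (\<forall>k. Ck_on k U f)"

definition chart :: "'c::topological_space set \<Rightarrow> ('c \<Rightarrow> real^'n) \<Rightarrow> bool" where
  "chart U \<psi> \<longleftrightarrow> open U \<and> open (\<psi> ` U) \<and> homeomorphism U (\<psi> ` U) \<psi> (inv_into U \<psi>)"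

definition smooth_atlas :: "('c::topological_space set \<times> ('c \<Rightarrow> real^'n)) set \<Rightarrow> bool" where
  "smooth_atlas At \<longleftrightarrow>
     (\<forall>(U,\<psi>)\<in>At. chart U \<psi>) \<and> (\<Union>(U,\<psi>)\<in>At. U) = UNIV \<and>
     (\<forall>(U,\<psi>)\<in>At. \<forall>(V,\<kappa>)\<in>At. smooth_on (\<psi> ` (U \<inter> V)) (\<kappa> \<circ> inv_into U \<psi>))"

definition smooth_fun :: "('c::topological_space set \<times> ('c \<Rightarrow> real^'n)) set \<Rightarrow> ('c \<Rightarrow> 'b::real_normed_vector) \<Rightarrow> bool" where
  "smooth_fun At f \<longleftrightarrow> (\<forall>(U,\<psi>)\<in>At. smooth_on (\<psi> ` U) (f \<circ> inv_into U \<psi>))"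

definition smooth_map :: "('c::topological_space set \<times> ('c \<Rightarrow> real^'n)) set \<Rightarrow> ('c \<Rightarrow> 'c) \<Rightarrow> bool" where
  "smooth_map At \<phi> \<longleftrightarrow> continuous_on UNIV \<phi> \<and>
     (\<forall>(U,\<psi>)\<in>At. \<forall>(V,\<kappa>)\<in>At. smooth_on (\<psi> ` (U \<inter> \<phi> -` V)) (\<kappa> \<circ> \<phi> \<circ> inv_into U \<psi>))"

definition diffeo :: "('c::topological_space set \<times> ('c \<Rightarrow> real^'n)) set \<Rightarrow> ('c \<Rightarrow> 'c) \<Rightarrow> bool" where
  "diffeo At \<phi> \<longleftrightarrow> bij \<phi> \<and> smooth_map At \<phi> \<and> smooth_map At (inv \<phi>)"

definition Zvec :: "(real^'p) set" where
  "Zvec = {k. \<forall>i. k $ i \<in> \<int>}"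

definition int_matrix :: "real^'p^'p \<Rightarrow> bool" where
  "int_matrix A \<longleftrightarrow> (\<forall>i j. A $ i $ j \<in> \<int>)"

definition GLZ :: "real^'p^'p \<Rightarrow> bool" where
  "GLZ A \<longleftrightarrow> invertible A \<and> int_matrix A \<and> int_matrix (matrix_inv A)"

definition complementary :: "(real^'p) set \<Rightarrow> (real^'p) set \<Rightarrow> bool" where
  "complementary E1 E2 \<longleftrightarrow> subspace E1 \<and> subspace E2 \<and> E1 \<inter> E2 = {0} \<and>
     {u + v | u v. u \<in> E1 \<and> v \<in> E2} = UNIV"

definition proj :: "(real^'p) set \<Rightarrow> (real^'p) set \<Rightarrow> real^'p \<Rightarrow> real^'p" where
  "proj E1 E2 v = (THE u. u \<in> E1 \<and> v - u \<in> E2)"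

text \<open>An automorphism (a,x) |-> (A a + f x, phi x) of R^p x C is represented by the
  triple (A, f, phi) (linear part, translation part, diffeomorphism of C).\<close>

type_synonym ('p,'c) baut = "(real^'p^'p) \<times> ('c \<Rightarrow> real^'p) \<times> ('c \<Rightarrow> 'c)"

definition bmap :: "('p::finite,'c) baut \<Rightarrow> (real^'p) \<times> 'c \<Rightarrow> (real^'p) \<times> 'c" where
  "bmap T = (case T of (A, f, \<phi>) \<Rightarrow> (\<lambda>(a, x). (A *v a + f x, \<phi> x)))"

definition tcomp :: "('p::finite,'c) baut \<Rightarrow> ('p::finite,'c) baut \<Rightarrow> ('p::finite,'c) baut" where
  "tcomp T S = (case T of (A, f, \<phi>) \<Rightarrow> case S of (B, g, \<psi>) \<Rightarrow>
      (A ** B, \<lambda>x. A *v g x + f (\<psi> x), \<phi> \<circ> \<psi>))"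

definition tid :: "('p::finite,'c) baut" where
  "tid = (mat 1, \<lambda>_. 0, id)"

definition tinv :: "('p::finite,'c) baut \<Rightarrow> ('p::finite,'c) baut" where
  "tinv T = (case T of (A, f, \<phi>) \<Rightarrow>
      (matrix_inv A, \<lambda>x. - (matrix_inv A *v f (inv \<phi> x)), inv \<phi>))"

definition autZ :: "('c::topological_space set \<times> ('c \<Rightarrow> real^'n)) set \<Rightarrow> (real^'p) set \<Rightarrow> (real^'p) set
                     \<Rightarrow> ('p::finite,'c) baut \<Rightarrow> bool" where
  "autZ At E1 E2 T \<longleftrightarrow> (case T of (A, f, \<phi>) \<Rightarrow>
      GLZ A \<and> smooth_fun At f \<and> diffeo At \<phi> \<and> (\<exists>c. \<forall>x. proj E1 E2 (f x) = c))"

text \<open>Reduction modulo Z^p: an automorphism of the torus bundle (S^1)^p x C is represented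
  by the set of all its lifts, i.e. the class of a lift modulo translations by Z^p.
  Thus P is this class map, and P^{-1}(Omega) is the union of the classes in Omega.\<close>
definition Pcls :: "('p::finite,'c) baut \<Rightarrow> ('p::finite,'c) baut set" where
  "Pcls T = (case T of (A, f, \<phi>) \<Rightarrow> {(A, \<lambda>x. f x + k, \<phi>) | k. k \<in> Zvec})"

definition autT :: "('c::topological_space set \<times> ('c \<Rightarrow> real^'n)) set \<Rightarrow> (real^'p) set \<Rightarrow> (real^'p) set
                     \<Rightarrow> ('p::finite,'c) baut set set" where
  "autT At E1 E2 = Pcls ` {T. autZ At E1 E2 T}"

definition linpart :: "('p::finite,'c) baut set \<Rightarrow> real^'p^'p" where
  "linpart \<omega> = fst (SOME T. T \<in> \<omega>)"

definition resC :: "('p::finite,'c) baut set \<Rightarrow> 'c \<Rightarrow> 'c" where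
  "resC \<omega> = snd (snd (SOME T. T \<in> \<omega>))"

definition is_subgroupT :: "('c::topological_space set \<times> ('c \<Rightarrow> real^'n)) set \<Rightarrow> (real^'p) set \<Rightarrow> (real^'p) set
                     \<Rightarrow> ('p::finite,'c) baut set set \<Rightarrow> bool" where
  "is_subgroupT At E1 E2 \<Omega> \<longleftrightarrow> \<Omega> \<subseteq> autT At E1 E2 \<and> Pcls tid \<in> \<Omega> \<and>
     (\<forall>\<omega>1\<in>\<Omega>. \<forall>\<omega>2\<in>\<Omega>. \<forall>T1\<in>\<omega>1. \<forall>T2\<in>\<omega>2. Pcls (tcomp T1 T2) \<in> \<Omega>) \<and>
     (\<forall>\<omega>\<in>\<Omega>. \<forall>T\<in>\<omega>. Pcls (tinv T) \<in> \<Omega>)"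

text \<open>Discreteness, in the compact-open topology (tested on lifts: a subset of the torus-bundle
  automorphisms is discrete iff its full preimage under the covering P is discrete).\<close>
definition discrete_aut :: "('p::finite,'c::topological_space) baut set set \<Rightarrow> bool" where
  "discrete_aut \<Omega> \<longleftrightarrow> (\<forall>T\<in>\<Union>\<Omega>. \<exists>N. finite N \<and>
       (\<forall>(K, W)\<in>N. compact K \<and> open W \<and> bmap T ` K \<subseteq> W) \<and>
       (\<forall>T'\<in>\<Union>\<Omega>. (\<forall>(K, W)\<in>N. bmap T' ` K \<subseteq> W) \<longrightarrow> T' = T))"

definition proper_action :: "('p::finite,'c::topological_space) baut set set \<Rightarrow> bool" where
  "proper_action \<Omega> \<longleftrightarrow> (\<forall>K. compact K \<longrightarrow> finite {\<omega>\<in>\<Omega>. resC \<omega> ` K \<inter> K \<noteq> {}})"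

definition cocompact_action :: "('p::finite,'c::topological_space) baut set set \<Rightarrow> bool" where
  "cocompact_action \<Omega> \<longleftrightarrow> (\<exists>K. compact K \<and> (\<Union>\<omega>\<in>\<Omega>. resC \<omega> ` K) = UNIV)"

definition scalar_product_on :: "(real^'p) set \<Rightarrow> (real^'p \<Rightarrow> real^'p \<Rightarrow> real) \<Rightarrow> bool" where
  "scalar_product_on E g \<longleftrightarrow> bilinear g \<and> (\<forall>u v. g u v = g v u) \<and> (\<forall>u\<in>E. u \<noteq> 0 \<longrightarrow> g u u > 0)"

definition similarity_on :: "(real^'p) set \<Rightarrow> (real^'p \<Rightarrow> real^'p \<Rightarrow> real) \<Rightarrow> real^'p^'p \<Rightarrow> bool" where
  "similarity_on E g A \<longleftrightarrow> (\<exists>r>0. \<forall>u\<in>E. \<forall>v\<in>E. g (A *v u) (A *v v) = r * g u v)"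

definition isometry_on :: "(real^'p) set \<Rightarrow> (real^'p \<Rightarrow> real^'p \<Rightarrow> real) \<Rightarrow> real^'p^'p \<Rightarrow> bool" where
  "isometry_on E g A \<longleftrightarrow> (\<forall>u\<in>E. \<forall>v\<in>E. g (A *v u) (A *v v) = g u v)"

end

theory Submission
  imports Defs "HOL-Computational_Algebra.Polynomial"
begin


lemma CkI: "(\<And>x. x\<in>U \<Longrightarrow> (f has_derivative f' x) (at x)) \<Longrightarrow> (\<And>v. Ck_on k U (\<lambda>x. f' x v)) \<Longrightarrow> Ck_on (Suc k) U f"
  by (simp only: Ck_on.simps) blast

lemma Ck_mono: "Ck_on (Suc k) U f \<Longrightarrow> Ck_on k U f"
proof (induction k arbitrary: f)
  case 0
  then obtain f' where d: "\<forall>x\<in>U. (f has_derivative f' x) (at x)" by auto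
  have "\<forall>x\<in>U. isCont f x" using d has_derivative_continuous by blast
  then show ?case by (simp add: continuous_at_imp_continuous_on)
next
  case (Suc k)
  then obtain f' where d: "\<forall>x\<in>U. (f has_derivative f' x) (at x)"
     and c: "\<forall>v. Ck_on (Suc k) U (\<lambda>x. f' x v)" by auto
  show ?case using d c Suc.IH by auto
qed

lemma Ck_mono_le: "m \<le> k \<Longrightarrow> Ck_on k U f \<Longrightarrow> Ck_on m U f"
proof (induction k)
  case 0 then show ?case by simp
next
  case (Suc k) then show ?case using Ck_mono by (cases "m = Suc k") auto
qed

lemma Ck_const: "Ck_on k U (\<lambda>x. c)"
proof (induction k arbitrary: c)
  case 0 then show ?case by simp
next
  case (Suc k)
  show ?case unfolding Ck_on.simps
    by (rule exI[of _ "\<lambda>x v. 0"]) (simp add: Suc)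
qed

lemma Ck_add: "Ck_on k U f \<Longrightarrow> Ck_on k U g \<Longrightarrow> Ck_on k U (\<lambda>x. f x + g x)"
proof (induction k arbitrary: f g)
  case 0 then show ?case by (simp add: continuous_on_add)
next
  case (Suc k)
  from Suc.prems obtain f' g' where "\<forall>x\<in>U. (f has_derivative f' x) (at x)" "\<forall>v. Ck_on k U (\<lambda>x. f' x v)"
     "\<forall>x\<in>U. (g has_derivative g' x) (at x)" "\<forall>v. Ck_on k U (\<lambda>x. g' x v)" by auto
  then show ?case using Suc.IH by (intro CkI[where f'="\<lambda>x v. f' x v + g' x v"]) (auto intro: has_derivative_add)
qed

lemma Ck_linear: "bounded_linear l \<Longrightarrow> Ck_on k U f \<Longrightarrow> Ck_on k U (\<lambda>x. l (f x))"
proof (induction k arbitrary: f)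
  case 0 then show ?case
    by (simp add: linear_continuous_on continuous_on_compose2[of UNIV l] )
next
  case (Suc k)
  from Suc.prems obtain f' where "\<forall>x\<in>U. (f has_derivative f' x) (at x)" "\<forall>v. Ck_on k U (\<lambda>x. f' x v)" by auto
  then show ?case using Suc by (intro CkI[where f'="\<lambda>x v. l (f' x v)"]) (auto intro: bounded_linear.has_derivative)
qed

lemma Ck_bounded_linear: "bounded_linear l \<Longrightarrow> Ck_on k U l"
  using Ck_linear[of l k U "\<lambda>x. x"] 
proof -
  assume bl: "bounded_linear l"
  have "Ck_on k U (\<lambda>x. x)"
  proof (induction k)
    case 0 then show ?case by simp
  next
    case (Suc k)
    show ?case by (rule CkI[where f'="\<lambda>x v. v"]) (auto intro: Ck_const)
  qed
  then show ?thesis using Ck_linear[OF bl, of k U "\<lambda>x. x"] by simp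
qed

lemma Ck_scaleR: "Ck_on k U a \<Longrightarrow> Ck_on k U f \<Longrightarrow> Ck_on k U (\<lambda>x. a x *\<^sub>R f x)"
proof (induction k arbitrary: a f)
  case 0 then show ?case by (simp add: continuous_on_scaleR)
next
  case (Suc k)
  from Suc.prems obtain f' a' where df: "\<forall>x\<in>U. (f has_derivative f' x) (at x)" "\<forall>v. Ck_on k U (\<lambda>x. f' x v)"
     and da: "\<forall>x\<in>U. (a has_derivative a' x) (at x)" "\<forall>v. Ck_on k U (\<lambda>x. a' x v)" by auto
  have ak: "Ck_on k U a" and fk: "Ck_on k U f" using Suc.prems Ck_mono by auto
  show ?case
  proof (rule CkI[where f'="\<lambda>x v. a x *\<^sub>R f' x v + a' x v *\<^sub>R f x"])
    show "((\<lambda>x. a x *\<^sub>R f x) has_derivative (\<lambda>v. a x *\<^sub>R f' x v + a' x v *\<^sub>R f x)) (at x)" if "x \<in> U" for x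
      using df da that by (auto intro: has_derivative_scaleR)
    show "Ck_on k U (\<lambda>x. a x *\<^sub>R f' x v + a' x v *\<^sub>R f x)" for v
      using Suc.IH ak fk df da Ck_add by blast
  qed
qed

lemma Ck_sum: "finite I \<Longrightarrow> (\<And>i. i \<in> I \<Longrightarrow> Ck_on k U (f i)) \<Longrightarrow> Ck_on k U (\<lambda>x. \<Sum>i\<in>I. f i x)"
  by (induction I rule: finite_induct) (auto intro: Ck_add Ck_const)

lemma Ck_restrict: "W \<subseteq> U \<Longrightarrow> Ck_on k U f \<Longrightarrow> Ck_on k W f"
proof (induction k arbitrary: f)
  case 0 then show ?case using continuous_on_subset by auto
next
  case (Suc k)
  then obtain f' where "\<forall>x\<in>U. (f has_derivative f' x) (at x)" "\<forall>v. Ck_on k U (\<lambda>x. f' x v)" by auto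
  then show ?case using Suc by (intro CkI[where f'=f']) auto
qed

lemma Ck_cong: "open U \<Longrightarrow> Ck_on k U f \<Longrightarrow> (\<And>x. x \<in> U \<Longrightarrow> f x = g x) \<Longrightarrow> Ck_on k U g"
proof (induction k arbitrary: f g)
  case 0 then show ?case using continuous_on_cong by auto
next
  case (Suc k)
  from Suc.prems obtain f' where df: "\<forall>x\<in>U. (f has_derivative f' x) (at x)" "\<forall>v. Ck_on k U (\<lambda>x. f' x v)" by auto
  have "\<forall>x\<in>U. (g has_derivative f' x) (at x)"
    using df Suc.prems by (metis has_derivative_transform_within_open)
  then show ?case using df by (intro CkI[where f'=f']) auto
qed

lemma Ck_Suc_canon:
  assumes "Ck_on (Suc k) U f" and oU: "open U"
  shows "(\<forall>x\<in>U. (f has_derivative frechet_derivative f (at x)) (at x)) \<and>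
         (\<forall>v. Ck_on k U (\<lambda>x. frechet_derivative f (at x) v))"
proof -
  from assms obtain f' where df: "\<forall>x\<in>U. (f has_derivative f' x) (at x)" "\<forall>v. Ck_on k U (\<lambda>x. f' x v)" by auto
  have e: "\<forall>x\<in>U. frechet_derivative f (at x) = f' x"
    using df(1) by (metis frechet_derivative_at)
  have "\<forall>v. Ck_on k U (\<lambda>x. frechet_derivative f (at x) v)"
  proof
    fix v
    show "Ck_on k U (\<lambda>x. frechet_derivative f (at x) v)"
      by (rule Ck_cong[OF oU, where f="\<lambda>x. f' x v"]) (use df e in auto)
  qed
  then show ?thesis using df e by auto
qed

lemma Ck_local:
  assumes "open U" "\<And>x. x \<in> U \<Longrightarrow> \<exists>W. open W \<and> x \<in> W \<and> W \<subseteq> U \<and> Ck_on k W f"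
  shows "Ck_on k U f"
  using assms
proof (induction k arbitrary: f)
  case 0
  have "\<forall>x\<in>U. isCont f x"
  proof
    fix x assume "x \<in> U"
    then obtain W where W: "open W" "x \<in> W" "Ck_on 0 W f" using "0.prems"(2) by blast
    then show "isCont f x" using continuous_on_eq_continuous_at[OF W(1)] by auto
  qed
  then show ?case by (simp add: continuous_at_imp_continuous_on)
next
  case (Suc k)
  show ?case
  proof (rule CkI[where f'="\<lambda>x. frechet_derivative f (at x)"])
    fix x assume "x \<in> U"
    then obtain W where "open W" "x \<in> W" "Ck_on (Suc k) W f" using Suc.prems by blast
    then show "(f has_derivative frechet_derivative f (at x)) (at x)" using Ck_Suc_canon[of k W f] by simp
  next
    fix v
    show "Ck_on k U (\<lambda>x. frechet_derivative f (at x) v)"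
    proof (rule Suc.IH[OF Suc.prems(1)])
      fix x assume "x \<in> U"
      then obtain W where "open W" "x \<in> W" "W \<subseteq> U" "Ck_on (Suc k) W f" using Suc.prems by blast
      then show "\<exists>W. open W \<and> x \<in> W \<and> W \<subseteq> U \<and> Ck_on k W (\<lambda>x. frechet_derivative f (at x) v)"
        using Ck_Suc_canon[of k W f] by auto
    qed
  qed
qed

lemma linear_expand:
  fixes L :: "'a::euclidean_space \<Rightarrow> 'b::real_vector"
  assumes "linear L"
  shows "L w = (\<Sum>i\<in>Basis. (w \<bullet> i) *\<^sub>R L i)"
proof -
  have "L w = L (\<Sum>i\<in>Basis. (w \<bullet> i) *\<^sub>R i)" by (simp add: euclidean_representation)
  also have "\<dots> = (\<Sum>i\<in>Basis. (w \<bullet> i) *\<^sub>R L i)"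
    using assms by (simp add: linear_sum linear_scale o_def)
  finally show ?thesis .
qed

lemma Ck_compose:
  fixes g :: "'a::euclidean_space \<Rightarrow> 'b::real_normed_vector" and h :: "'c::euclidean_space \<Rightarrow> 'a"
  assumes "open V" "Ck_on k V g" "Ck_on k U h" "h ` U \<subseteq> V" and oU: "open U"
  shows "Ck_on k U (\<lambda>x. g (h x))"
  using assms(1-4)
proof (induction k arbitrary: g h V)
  case 0 then show ?case using continuous_on_compose2 by auto
next
  case (Suc k)
  from Suc.prems obtain g' where dg: "\<forall>y\<in>V. (g has_derivative g' y) (at y)" "\<forall>w. Ck_on k V (\<lambda>y. g' y w)" by auto
  from Suc.prems obtain h' where dh: "\<forall>x\<in>U. (h has_derivative h' x) (at x)" "\<forall>v. Ck_on k U (\<lambda>x. h' x v)" by auto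
  have hk: "Ck_on k U h" using Suc.prems Ck_mono by blast
  show ?case
  proof (rule CkI[where f'="\<lambda>x v. g' (h x) (h' x v)"])
    fix x assume "x \<in> U"
    then show "((\<lambda>x. g (h x)) has_derivative (\<lambda>v. g' (h x) (h' x v))) (at x)"
      using dg dh Suc.prems(4) by (intro has_derivative_compose[of h "h' x" x UNIV g "g' (h x)"]) auto
  next
    fix v
    have e: "g' (h x) (h' x v) = (\<Sum>i\<in>Basis. (h' x v \<bullet> i) *\<^sub>R g' (h x) i)" if "x \<in> U" for x
    proof -
      have "linear (g' (h x))" using dg Suc.prems(4) that
        by (meson bounded_linear.linear has_derivative_bounded_linear image_subset_iff)
      then show ?thesis by (rule linear_expand)
    qed
    have S: "Ck_on k U (\<lambda>x. \<Sum>i\<in>Basis. (h' x v \<bullet> i) *\<^sub>R g' (h x) i)"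
    proof (rule Ck_sum)
      fix i :: 'a assume "i \<in> Basis"
      have c1: "Ck_on k U (\<lambda>x. h' x v \<bullet> i)"
        using Ck_linear[OF bounded_linear_inner_left, of k U "\<lambda>x. h' x v"] dh by auto
      have c2: "Ck_on k U (\<lambda>x. g' (h x) i)"
        using Suc.IH[OF Suc.prems(1), of "\<lambda>y. g' y i" h] dg hk Suc.prems(4) by auto
      show "Ck_on k U (\<lambda>x. (h' x v \<bullet> i) *\<^sub>R g' (h x) i)" using Ck_scaleR c1 c2 by blast
    qed simp
    show "Ck_on k U (\<lambda>x. g' (h x) (h' x v))"
      by (rule Ck_cong[OF oU S]) (use e in auto)
  qed
qed



definition gfun :: "real poly \<Rightarrow> real \<Rightarrow> real" where
  "gfun p t = (if t > 0 then poly p (inverse t) * exp (- inverse t) else 0)"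

definition dq :: "real poly \<Rightarrow> real poly" where
  "dq p = [:0,0,1:] * (p - pderiv p)"

lemma poly_exp_lim: fixes p :: "real poly" shows "((\<lambda>u. poly p u * exp (- u)) \<longlongrightarrow> 0) at_top"
proof -
  have "((\<lambda>u. \<Sum>i\<le>degree p. coeff p i * (u ^ i / exp u)) \<longlongrightarrow> 0) at_top"
    by (intro tendsto_null_sum tendsto_mult_right_zero tendsto_power_div_exp_0)
  moreover have "(\<Sum>i\<le>degree p. coeff p i * (u ^ i / exp u)) = poly p u * exp (- u)" for u :: real
    by (simp add: poly_altdef sum_distrib_right exp_minus divide_inverse mult.assoc)
  ultimately show ?thesis by simp
qed

lemma poly_inv_exp_lim: fixes p :: "real poly" shows "((\<lambda>t. poly p (inverse t) * exp (- inverse t)) \<longlongrightarrow> 0) (at_right (0::real))"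
  using filterlim_compose[OF poly_exp_lim filterlim_inverse_at_top_right] by (simp add: o_def)

lemma gfun_deriv: "DERIV (gfun p) t :> gfun (dq p) t"
proof (cases "t > 0")
  case True
  have d: "((\<lambda>t. poly p (inverse t) * exp (- inverse t)) has_real_derivative gfun (dq p) t) (at t)"
    using True
    by (auto intro!: derivative_eq_intros simp: gfun_def dq_def power2_eq_square field_simps
         poly_DERIV[THEN DERIV_chain2])
  show ?thesis
    by (rule has_field_derivative_transform_within_open[OF d, of "{0<..}"]) (use True in \<open>auto simp: gfun_def\<close>)
next
  case False
  show ?thesis
  proof (cases "t < 0")
    case True
    have d: "((\<lambda>t. 0) has_real_derivative gfun (dq p) t) (at t)" using True by (simp add: gfun_def)
    show ?thesis
      by (rule has_field_derivative_transform_within_open[OF d, of "{..<0}"]) (use True in \<open>auto simp: gfun_def\<close>)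
  next
    case False
    with \<open>\<not> t > 0\<close> have t0: "t = 0" by simp
    have "((\<lambda>y. (gfun p y - gfun p 0) / (y - 0)) \<longlongrightarrow> 0) (at (0::real))"
    proof (rule filterlim_split_at)
      show "((\<lambda>y. (gfun p y - gfun p 0) / (y - 0)) \<longlongrightarrow> 0) (at_left 0)"
        by (rule tendsto_eventually) (auto simp: gfun_def eventually_at_left_field intro!: exI[of _ "-1"])
      have "((\<lambda>t. poly (pCons 0 p) (inverse t) * exp (- inverse t)) \<longlongrightarrow> 0) (at_right (0::real))"
        by (rule poly_inv_exp_lim)
      moreover have "eventually (\<lambda>y. poly (pCons 0 p) (inverse y) * exp (- inverse y) = (gfun p y - gfun p 0) / (y - 0)) (at_right 0)"
        by (auto simp: gfun_def eventually_at_right_field divide_inverse intro!: exI[of _ 1])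
      ultimately show "((\<lambda>y. (gfun p y - gfun p 0) / (y - 0)) \<longlongrightarrow> 0) (at_right 0)"
        using tendsto_cong by fastforce
    qed
    then show ?thesis using t0 by (simp add: has_field_derivative_iff gfun_def)
  qed
qed

lemma Ck_DERIV:
  fixes f :: "real \<Rightarrow> real"
  assumes "\<And>x. x \<in> U \<Longrightarrow> DERIV f x :> f2 x" "Ck_on k U f2"
  shows "Ck_on (Suc k) U f"
proof (rule CkI[where f'="\<lambda>x v. f2 x * v"])
  show "(f has_derivative (\<lambda>v. f2 x * v)) (at x)" if "x \<in> U" for x
    using assms(1)[OF that] by (simp add: has_field_derivative_def)
  show "Ck_on k U (\<lambda>x. f2 x * v)" for v
    using Ck_scaleR[OF assms(2) Ck_const[of k U v]] by simp
qed

lemma Ck_gfun: "Ck_on k UNIV (gfun p)"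
proof (induction k arbitrary: p)
  case 0
  have "continuous_on UNIV (gfun p)"
    using gfun_deriv DERIV_isCont by (blast intro: continuous_at_imp_continuous_on)
  then show ?case by simp
next
  case (Suc k) then show ?case using Ck_DERIV[OF gfun_deriv] by blast
qed

lemma Ck_inverse: "Ck_on k {0<..} (\<lambda>t::real. inverse t)"
proof (induction k)
  case 0 then show ?case by (simp add: continuous_on_inverse continuous_on_id)
next
  case (Suc k)
  have "Ck_on k {0<..} (\<lambda>t::real. - (inverse t * inverse t))"
    using Ck_linear[OF bounded_linear_minus[OF bounded_linear_ident] Ck_scaleR[OF Suc Suc]] by simp
  then show ?case
    by (rule Ck_DERIV[rotated]) (auto intro!: derivative_eq_intros simp: power2_eq_square)
qed



definition bump :: "real^'n \<Rightarrow> real \<Rightarrow> real^'n \<Rightarrow> real" where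
  "bump c r y = gfun [:1:] (r\<^sup>2 - (y - c) \<bullet> (y - c))"

lemma Ck_sqdist: "Ck_on k UNIV (\<lambda>y::'a::euclidean_space. r\<^sup>2 - (y - c) \<bullet> (y - c))"
proof (cases k)
  case 0 then show ?thesis by (simp add: continuous_on_diff continuous_on_inner continuous_on_const continuous_on_id)
next
  case (Suc m)
  show ?thesis unfolding Suc
  proof (rule CkI[where f'="\<lambda>y v. - ((y - c) \<bullet> v + v \<bullet> (y - c))"])
    show "((\<lambda>y. r\<^sup>2 - (y - c) \<bullet> (y - c)) has_derivative (\<lambda>v. - ((y - c) \<bullet> v + v \<bullet> (y - c)))) (at y)" for y
      by (auto intro!: derivative_eq_intros)
    fix v
    have bl: "bounded_linear (\<lambda>y::'a. - (2 * (y \<bullet> v)))"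
      by (intro bounded_linear_minus bounded_linear_const_mult bounded_linear_inner_left)
    have "Ck_on m UNIV (\<lambda>y::'a. - (2 * (y \<bullet> v)) + 2 * (c \<bullet> v))"
      by (rule Ck_add[OF Ck_bounded_linear[OF bl] Ck_const])
    then show "Ck_on m UNIV (\<lambda>y. - ((y - c) \<bullet> v + v \<bullet> (y - c)))"
      by (rule Ck_cong[OF open_UNIV]) (simp add: inner_diff_left inner_diff_right inner_commute)
  qed
qed

lemma Ck_bump: "Ck_on k UNIV (bump c r)"
  unfolding bump_def
  by (rule Ck_compose[OF open_UNIV Ck_gfun Ck_sqdist]) auto

lemma gfun1_pos: "gfun [:1:] t > 0 \<longleftrightarrow> t > 0" and gfun1_nonneg: "gfun [:1:] t \<ge> 0"
  by (auto simp: gfun_def)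

lemma bump_nonneg: "bump c r y \<ge> 0" by (simp add: bump_def gfun1_nonneg)

lemma bump_pos: "r > 0 \<Longrightarrow> bump c r y > 0 \<longleftrightarrow> dist y c < r"
proof -
  assume r: "r > 0"
  have "(y - c) \<bullet> (y - c) = (dist y c)\<^sup>2" by (simp add: dist_norm power2_norm_eq_inner)
  then have "bump c r y > 0 \<longleftrightarrow> (dist y c)\<^sup>2 < r\<^sup>2" by (simp add: bump_def gfun1_pos)
  also have "\<dots> \<longleftrightarrow> dist y c < r"
  proof
    assume "(dist y c)\<^sup>2 < r\<^sup>2" then show "dist y c < r" using r power2_less_imp_less by fastforce
  next
    assume "dist y c < r" then show "(dist y c)\<^sup>2 < r\<^sup>2" by (simp add: power_strict_mono)
  qed
  finally show ?thesis .
qed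

section \<open>Charts\<close>

context
  fixes At :: "('c::topological_space set \<times> ('c \<Rightarrow> real^'n)) set"
  assumes atlas: "smooth_atlas At"
begin

lemma chart_of: assumes "(U,\<psi>) \<in> At"
  shows "open U" "open (\<psi> ` U)" "homeomorphism U (\<psi> ` U) \<psi> (inv_into U \<psi>)"
    "\<And>z. z \<in> U \<Longrightarrow> inv_into U \<psi> (\<psi> z) = z"
    "continuous_on U \<psi>" "continuous_on (\<psi> ` U) (inv_into U \<psi>)"
    "\<And>w. w \<in> \<psi> ` U \<Longrightarrow> inv_into U \<psi> w \<in> U"
    "\<And>w. w \<in> \<psi> ` U \<Longrightarrow> \<psi> (inv_into U \<psi> w) = w"
proof -
  have c: "chart U \<psi>" using atlas assms unfolding smooth_atlas_def by auto
  then show "open U" "open (\<psi> ` U)" "homeomorphism U (\<psi> ` U) \<psi> (inv_into U \<psi>)"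
    unfolding chart_def by auto
  then show "\<And>z. z \<in> U \<Longrightarrow> inv_into U \<psi> (\<psi> z) = z"
     "continuous_on U \<psi>" "continuous_on (\<psi> ` U) (inv_into U \<psi>)"
    "\<And>w. w \<in> \<psi> ` U \<Longrightarrow> inv_into U \<psi> w \<in> U"
    "\<And>w. w \<in> \<psi> ` U \<Longrightarrow> \<psi> (inv_into U \<psi> w) = w"
    unfolding homeomorphism_def by auto
qed

lemma chart_open_image: assumes "(U,\<psi>) \<in> At" "open S" shows "open (\<psi> ` (U \<inter> S))"
proof -
  have "openin (top_of_set U) (U \<inter> S)" using assms by auto
  then have "openin (top_of_set (\<psi> ` U)) (\<psi> ` (U \<inter> S))"
    using homeomorphism_imp_open_map chart_of(3)[OF assms(1)] by blast
  then show ?thesis using chart_of(2)[OF assms(1)] openin_open_trans by blast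
qed

lemma atlas_cover: "\<exists>U \<psi>. (U,\<psi>) \<in> At \<and> z \<in> U"
proof -
  have "z \<in> (\<Union>(U,\<psi>)\<in>At. U)" using atlas unfolding smooth_atlas_def by auto
  then show ?thesis by auto
qed

lemma smooth_funD: "smooth_fun At f \<Longrightarrow> (U,\<psi>) \<in> At \<Longrightarrow> Ck_on k (\<psi> ` U) (f \<circ> inv_into U \<psi>)"
  unfolding smooth_fun_def smooth_on_def by (drule bspec[of _ _ "(U,\<psi>)"]) auto

lemma smooth_mapD: "smooth_map At \<phi> \<Longrightarrow> (U,\<psi>) \<in> At \<Longrightarrow> (V,\<kappa>) \<in> At \<Longrightarrow>
   Ck_on k (\<psi> ` (U \<inter> \<phi> -` V)) (\<kappa> \<circ> \<phi> \<circ> inv_into U \<psi>)"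
proof -
  assume a: "smooth_map At \<phi>" "(U,\<psi>) \<in> At" "(V,\<kappa>) \<in> At"
  have h1: "\<forall>(U,\<psi>)\<in>At. \<forall>(V,\<kappa>)\<in>At. smooth_on (\<psi> ` (U \<inter> \<phi> -` V)) (\<kappa> \<circ> \<phi> \<circ> inv_into U \<psi>)"
    using a(1) unfolding smooth_map_def by blast
  from bspec[OF h1 a(2)] have h2: "\<forall>(V,\<kappa>)\<in>At. smooth_on (\<psi> ` (U \<inter> \<phi> -` V)) (\<kappa> \<circ> \<phi> \<circ> inv_into U \<psi>)" by simp
  from bspec[OF h2 a(3)] show ?thesis unfolding smooth_on_def by simp
qed

lemma smooth_fun_local:
  assumes "\<And>z. \<exists>W h. open W \<and> z \<in> W \<and> smooth_fun At h \<and> (\<forall>y\<in>W. f y = h y)"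
  shows "smooth_fun At f"
  unfolding smooth_fun_def smooth_on_def
proof (clarify)
  fix U \<psi> k assume U: "(U,\<psi>) \<in> At"
  show "Ck_on k (\<psi> ` U) (f \<circ> inv_into U \<psi>)"
  proof (rule Ck_local[OF chart_of(2)[OF U]])
    fix w assume w: "w \<in> \<psi> ` U"
    then obtain z where z: "z \<in> U" "w = \<psi> z" by auto
    obtain W h where Wh: "open W" "z \<in> W" "smooth_fun At h" "\<forall>y\<in>W. f y = h y" using assms by blast
    let ?W = "\<psi> ` (U \<inter> W)"
    have "open ?W" using chart_open_image[OF U Wh(1)] .
    moreover have "w \<in> ?W" using z Wh by auto
    moreover have "?W \<subseteq> \<psi> ` U" by auto
    moreover have "Ck_on k ?W (f \<circ> inv_into U \<psi>)"
    proof (rule Ck_cong[OF \<open>open ?W\<close>])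
      show "Ck_on k ?W (h \<circ> inv_into U \<psi>)"
        using smooth_funD[OF Wh(3) U] by (rule Ck_restrict[rotated]) auto
      fix w' assume "w' \<in> ?W"
      then obtain z' where "z' \<in> U \<inter> W" "w' = \<psi> z'" by auto
      then show "(h \<circ> inv_into U \<psi>) w' = (f \<circ> inv_into U \<psi>) w'"
        using chart_of(4)[OF U] Wh(4) by auto
    qed
    ultimately show "\<exists>W. open W \<and> w \<in> W \<and> W \<subseteq> \<psi> ` U \<and> Ck_on k W (f \<circ> inv_into U \<psi>)" by blast
  qed
qed

lemma smooth_funI: "(\<And>U \<psi> k. (U,\<psi>) \<in> At \<Longrightarrow> Ck_on k (\<psi> ` U) (f \<circ> inv_into U \<psi>)) \<Longrightarrow> smooth_fun At f"
  unfolding smooth_fun_def smooth_on_def by auto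

lemma smooth_fun_const: "smooth_fun At (\<lambda>z. c)"
  by (rule smooth_funI) (simp add: o_def Ck_const)

lemma smooth_fun_add: "smooth_fun At f \<Longrightarrow> smooth_fun At g \<Longrightarrow> smooth_fun At (\<lambda>z. f z + g z)"
proof (rule smooth_funI)
  fix U \<psi> k assume a: "smooth_fun At f" "smooth_fun At g" and U: "(U,\<psi>) \<in> At"
  show "Ck_on k (\<psi> ` U) ((\<lambda>z. f z + g z) \<circ> inv_into U \<psi>)"
    using Ck_add[OF smooth_funD[OF a(1) U, of k] smooth_funD[OF a(2) U, of k]] by (simp add: o_def)
qed

lemma smooth_fun_scaleR: "smooth_fun At a \<Longrightarrow> smooth_fun At f \<Longrightarrow> smooth_fun At (\<lambda>z. a z *\<^sub>R f z)"
proof (rule smooth_funI)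
  fix U \<psi> k assume a: "smooth_fun At a" "smooth_fun At f" and U: "(U,\<psi>) \<in> At"
  show "Ck_on k (\<psi> ` U) ((\<lambda>z. a z *\<^sub>R f z) \<circ> inv_into U \<psi>)"
    using Ck_scaleR[OF smooth_funD[OF a(1) U, of k] smooth_funD[OF a(2) U, of k]] by (simp add: o_def)
qed

lemma smooth_fun_linear: "bounded_linear l \<Longrightarrow> smooth_fun At f \<Longrightarrow> smooth_fun At (\<lambda>z. l (f z))"
proof (rule smooth_funI)
  fix U \<psi> k assume a: "bounded_linear l" "smooth_fun At f" and U: "(U,\<psi>) \<in> At"
  show "Ck_on k (\<psi> ` U) ((\<lambda>z. l (f z)) \<circ> inv_into U \<psi>)"
    using Ck_linear[OF a(1) smooth_funD[OF a(2) U, of k]] by (simp add: o_def)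
qed

lemma smooth_fun_sum: "finite I \<Longrightarrow> (\<And>i. i \<in> I \<Longrightarrow> smooth_fun At (f i)) \<Longrightarrow> smooth_fun At (\<lambda>z. \<Sum>i\<in>I. f i z)"
  by (induction I rule: finite_induct) (auto intro: smooth_fun_add smooth_fun_const)

lemma smooth_fun_Ck:
  fixes g :: "'a::euclidean_space \<Rightarrow> 'b::real_normed_vector"
  assumes "open V" "\<And>k. Ck_on k V g" "smooth_fun At f" "range f \<subseteq> V"
  shows "smooth_fun At (\<lambda>z. g (f z))"
  unfolding smooth_fun_def smooth_on_def
proof clarify
  fix U \<psi> k assume U: "(U,\<psi>) \<in> At"
  have "Ck_on k (\<psi> ` U) (\<lambda>x. g ((f \<circ> inv_into U \<psi>) x))"
    by (rule Ck_compose[OF assms(1) assms(2) smooth_funD[OF assms(3) U] _ chart_of(2)[OF U]])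
       (use assms(4) in auto)
  then show "Ck_on k (\<psi> ` U) ((\<lambda>z. g (f z)) \<circ> inv_into U \<psi>)" by (simp add: o_def)
qed

lemma smooth_fun_comp_map:
  assumes h: "smooth_fun At h" and \<phi>: "smooth_map At \<phi>"
  shows "smooth_fun At (\<lambda>z. h (\<phi> z))"
  unfolding smooth_fun_def smooth_on_def
proof clarify
  fix V \<kappa> k assume V: "(V,\<kappa>) \<in> At"
  show "Ck_on k (\<kappa> ` V) ((\<lambda>z. h (\<phi> z)) \<circ> inv_into V \<kappa>)"
  proof (rule Ck_local[OF chart_of(2)[OF V]])
    fix w assume w: "w \<in> \<kappa> ` V"
    then obtain z where z: "z \<in> V" "w = \<kappa> z" by auto
    obtain U \<psi> where U: "(U,\<psi>) \<in> At" "\<phi> z \<in> U" using atlas_cover by blast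
    have c\<phi>: "continuous_on UNIV \<phi>" using \<phi> unfolding smooth_map_def by auto
    have oP: "open (\<phi> -` U)" using continuous_on_open_vimage[OF open_UNIV] c\<phi> chart_of(1)[OF U(1)] by auto
    let ?W = "\<kappa> ` (V \<inter> \<phi> -` U)"
    have oW: "open ?W" using chart_open_image[OF V oP] .
    moreover have "w \<in> ?W" using z U by auto
    moreover have "?W \<subseteq> \<kappa> ` V" by auto
    moreover have "Ck_on k ?W ((\<lambda>z. h (\<phi> z)) \<circ> inv_into V \<kappa>)"
    proof (rule Ck_cong[OF oW])
      have sm: "Ck_on k ?W (\<psi> \<circ> \<phi> \<circ> inv_into V \<kappa>)" using smooth_mapD[OF \<phi> V U(1)] .
      have img: "(\<psi> \<circ> \<phi> \<circ> inv_into V \<kappa>) ` ?W \<subseteq> \<psi> ` U"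
      proof
        fix y assume "y \<in> (\<psi> \<circ> \<phi> \<circ> inv_into V \<kappa>) ` ?W"
        then obtain z' where "z' \<in> V" "\<phi> z' \<in> U" "y = \<psi> (\<phi> (inv_into V \<kappa> (\<kappa> z')))" by auto
        then show "y \<in> \<psi> ` U" using chart_of(4)[OF V] by auto
      qed
      show "Ck_on k ?W (\<lambda>x. (h \<circ> inv_into U \<psi>) ((\<psi> \<circ> \<phi> \<circ> inv_into V \<kappa>) x))"
        by (rule Ck_compose[OF chart_of(2)[OF U(1)] smooth_funD[OF h U(1)] sm img oW])
      fix x assume "x \<in> ?W"
      then obtain z' where "z' \<in> V" "\<phi> z' \<in> U" "x = \<kappa> z'" by auto
      then show "(\<lambda>x. (h \<circ> inv_into U \<psi>) ((\<psi> \<circ> \<phi> \<circ> inv_into V \<kappa>) x)) x = ((\<lambda>z. h (\<phi> z)) \<circ> inv_into V \<kappa>) x"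
        using chart_of(4)[OF V] chart_of(4)[OF U(1)] by auto
    qed
    ultimately show "\<exists>W. open W \<and> w \<in> W \<and> W \<subseteq> \<kappa> ` V \<and> Ck_on k W ((\<lambda>z. h (\<phi> z)) \<circ> inv_into V \<kappa>)" by blast
  qed
qed

end



context
  fixes At :: "('c::t2_space set \<times> ('c \<Rightarrow> real^'n)) set"
  assumes atlas: "smooth_atlas At"
begin

lemma transD: "(V,\<kappa>) \<in> At \<Longrightarrow> (U,\<psi>) \<in> At \<Longrightarrow> Ck_on k (\<kappa> ` (V \<inter> U)) (\<psi> \<circ> inv_into V \<kappa>)"
proof -
  assume a: "(V,\<kappa>) \<in> At" "(U,\<psi>) \<in> At"
  have h1: "\<forall>(V,\<kappa>)\<in>At. \<forall>(U,\<psi>)\<in>At. smooth_on (\<kappa> ` (V \<inter> U)) (\<psi> \<circ> inv_into V \<kappa>)"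
    using atlas unfolding smooth_atlas_def by blast
  from bspec[OF h1 a(1)] have h2: "\<forall>(U,\<psi>)\<in>At. smooth_on (\<kappa> ` (V \<inter> U)) (\<psi> \<circ> inv_into V \<kappa>)" by simp
  from bspec[OF h2 a(2)] show ?thesis unfolding smooth_on_def by simp
qed

lemma chart_ball:
  assumes U: "(U,\<psi>) \<in> At" and x0: "x0 \<in> U"
  obtains r where "r > 0" "cball (\<psi> x0) r \<subseteq> \<psi> ` U"
    "open (U \<inter> \<psi> -` ball (\<psi> x0) r)" "compact (inv_into U \<psi> ` cball (\<psi> x0) r)"
    "U \<inter> \<psi> -` ball (\<psi> x0) r \<subseteq> inv_into U \<psi> ` cball (\<psi> x0) r"
    "inv_into U \<psi> ` cball (\<psi> x0) r \<subseteq> U"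
proof -
  obtain r where r: "r > 0" "cball (\<psi> x0) r \<subseteq> \<psi> ` U"
    using open_contains_cball chart_of(2)[OF atlas U] x0 by blast
  have "open (\<psi> -` ball (\<psi> x0) r \<inter> U)"
    using continuous_on_open_vimage[OF chart_of(1)[OF atlas U]] chart_of(5)[OF atlas U] by blast
  then have o: "open (U \<inter> \<psi> -` ball (\<psi> x0) r)" by (simp add: Int_commute)
  have c: "compact (inv_into U \<psi> ` cball (\<psi> x0) r)"
    using compact_continuous_image[OF continuous_on_subset[OF chart_of(6)[OF atlas U] r(2)]] by simp
  have s: "U \<inter> \<psi> -` ball (\<psi> x0) r \<subseteq> inv_into U \<psi> ` cball (\<psi> x0) r"
  proof
    fix z assume "z \<in> U \<inter> \<psi> -` ball (\<psi> x0) r"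
    then have "z = inv_into U \<psi> (\<psi> z)" "\<psi> z \<in> cball (\<psi> x0) r" using chart_of(4)[OF atlas U] by auto
    then show "z \<in> inv_into U \<psi> ` cball (\<psi> x0) r" by blast
  qed
  have s2: "inv_into U \<psi> ` cball (\<psi> x0) r \<subseteq> U" using r(2) chart_of(7)[OF atlas U] by blast
  show ?thesis using that r o c s s2 by blast
qed

lemma loc_compact: fixes x0 :: 'c shows "\<exists>W Wc. open W \<and> compact Wc \<and> x0 \<in> W \<and> W \<subseteq> Wc"
proof -
  obtain U \<psi> where U: "(U,\<psi>) \<in> At" "x0 \<in> U" using atlas_cover[OF atlas] by blast
  obtain r where "r > 0" "open (U \<inter> \<psi> -` ball (\<psi> x0) r)" "compact (inv_into U \<psi> ` cball (\<psi> x0) r)"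
    "U \<inter> \<psi> -` ball (\<psi> x0) r \<subseteq> inv_into U \<psi> ` cball (\<psi> x0) r"
    using chart_ball[OF U] by metis
  moreover have "x0 \<in> U \<inter> \<psi> -` ball (\<psi> x0) r" using U \<open>r > 0\<close> by auto
  ultimately show ?thesis by blast
qed

lemma bump_exists: fixes x0 :: 'c shows "\<exists>(b::'c\<Rightarrow>real) S L. smooth_fun At b \<and> (\<forall>z. b z \<ge> 0) \<and> open S \<and> x0 \<in> S \<and> (\<forall>z\<in>S. b z > 0)
   \<and> compact L \<and> (\<forall>z. z \<notin> L \<longrightarrow> b z = 0)"
proof -
  obtain U \<psi> where U: "(U,\<psi>) \<in> At" "x0 \<in> U" using atlas_cover[OF atlas] by blast
  obtain r where r: "r > 0" "open (U \<inter> \<psi> -` ball (\<psi> x0) r)" "compact (inv_into U \<psi> ` cball (\<psi> x0) r)"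
    "U \<inter> \<psi> -` ball (\<psi> x0) r \<subseteq> inv_into U \<psi> ` cball (\<psi> x0) r"
    "inv_into U \<psi> ` cball (\<psi> x0) r \<subseteq> U"
    using chart_ball[OF U] by metis
  define S where "S = U \<inter> \<psi> -` ball (\<psi> x0) r"
  define L where "L = inv_into U \<psi> ` cball (\<psi> x0) r"
  define b where "b z = (if z \<in> U then bump (\<psi> x0) r (\<psi> z) else 0)" for z
  have b0: "\<forall>z. b z \<ge> 0" by (simp add: b_def bump_nonneg)
  have bS: "\<forall>z\<in>S. b z > 0" using r(1) by (auto simp: b_def S_def bump_pos dist_commute)
  have bL: "\<forall>z. z \<notin> L \<longrightarrow> b z = 0"
  proof (intro allI impI)
    fix z assume "z \<notin> L"
    show "b z = 0"
    proof (rule ccontr)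
      assume "b z \<noteq> 0"
      then have "z \<in> U" by (auto simp: b_def split: if_splits)
      have "b z > 0" using b0 \<open>b z \<noteq> 0\<close> by (simp add: order_less_le)
      then have "bump (\<psi> x0) r (\<psi> z) > 0" using \<open>z \<in> U\<close> by (simp add: b_def)
      then have "z \<in> S" using r(1) \<open>z \<in> U\<close> by (simp add: S_def bump_pos dist_commute)
      then show False using \<open>z \<notin> L\<close> r(4) S_def L_def by blast
    qed
  qed
  have LU: "L \<subseteq> U" using r(5) L_def by simp
  have cL: "closed L" using r(3) L_def compact_imp_closed by blast
  have sb: "smooth_fun At b"
  proof (rule smooth_funI[OF atlas])
    fix V \<kappa> k assume V: "(V,\<kappa>) \<in> At"
    show "Ck_on k (\<kappa> ` V) (b \<circ> inv_into V \<kappa>)"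
    proof (rule Ck_local[OF chart_of(2)[OF atlas V]])
      fix w assume "w \<in> \<kappa> ` V"
      then obtain z where z: "z \<in> V" "w = \<kappa> z" by auto
      show "\<exists>W. open W \<and> w \<in> W \<and> W \<subseteq> \<kappa> ` V \<and> Ck_on k W (b \<circ> inv_into V \<kappa>)"
      proof (cases "z \<in> U")
        case True
        let ?W = "\<kappa> ` (V \<inter> U)"
        have oW: "open ?W" using chart_open_image[OF atlas V chart_of(1)[OF atlas U(1)]] .
        have img: "(\<psi> \<circ> inv_into V \<kappa>) ` ?W \<subseteq> UNIV" by simp
        have "Ck_on k ?W (\<lambda>x. bump (\<psi> x0) r ((\<psi> \<circ> inv_into V \<kappa>) x))"
          by (rule Ck_compose[OF open_UNIV Ck_bump transD[OF V U(1)] img oW])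
        then have "Ck_on k ?W (b \<circ> inv_into V \<kappa>)"
        proof (rule Ck_cong[OF oW])
          fix x assume "x \<in> ?W"
          then obtain z' where "z' \<in> V \<inter> U" "x = \<kappa> z'" by auto
          then show "bump (\<psi> x0) r ((\<psi> \<circ> inv_into V \<kappa>) x) = (b \<circ> inv_into V \<kappa>) x"
            using chart_of(4)[OF atlas V] by (simp add: b_def)
        qed
        moreover have "w \<in> ?W" using z True by auto
        ultimately show ?thesis using oW by blast
      next
        case False
        let ?W = "\<kappa> ` (V \<inter> (- L))"
        have oW: "open ?W" using chart_open_image[OF atlas V] cL by (simp add: open_Compl)
        have "Ck_on k ?W (\<lambda>x. 0::real)" by (rule Ck_const)
        then have "Ck_on k ?W (b \<circ> inv_into V \<kappa>)"
        proof (rule Ck_cong[OF oW])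
          fix x assume "x \<in> ?W"
          then obtain z' where "z' \<in> V" "z' \<notin> L" "x = \<kappa> z'" by auto
          then show "0 = (b \<circ> inv_into V \<kappa>) x"
            using chart_of(4)[OF atlas V] bL by simp
        qed
        moreover have "w \<in> ?W" using z False LU by auto
        ultimately show ?thesis using oW by blast
      qed
    qed
  qed
  have "x0 \<in> S" using U r(1) S_def by auto
  moreover have "open S" "compact L" using r(2,3) S_def L_def by simp_all
  ultimately show ?thesis using sb b0 bS bL by (intro exI[of _ b] exI[of _ S] exI[of _ L]) blast
qed

lemma chi_exists:
  assumes K: "compact K"
  shows "\<exists>(ch::'c\<Rightarrow>real) L. smooth_fun At ch \<and> (\<forall>z. ch z \<ge> 0) \<and> (\<forall>k\<in>K. ch k > 0) \<and> compact L \<and> (\<forall>z. z \<notin> L \<longrightarrow> ch z = 0)"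
proof -
  have "\<forall>x. \<exists>(b::'c\<Rightarrow>real) S L. smooth_fun At b \<and> (\<forall>z. b z \<ge> 0) \<and> open S \<and> x \<in> S \<and> (\<forall>z\<in>S. b z > 0)
   \<and> compact L \<and> (\<forall>z. z \<notin> L \<longrightarrow> b z = 0)" using bump_exists by blast
  then obtain B :: "'c \<Rightarrow> 'c \<Rightarrow> real" and Sf Lf where BSL: "\<And>x. smooth_fun At (B x) \<and> (\<forall>z. B x z \<ge> 0) \<and> open (Sf x) \<and> x \<in> Sf x \<and> (\<forall>z\<in>Sf x. B x z > 0)
   \<and> compact (Lf x) \<and> (\<forall>z. z \<notin> Lf x \<longrightarrow> B x z = 0)" unfolding choice_iff by blast
  obtain F where F: "F \<subseteq> K" "finite F" "K \<subseteq> (\<Union>c\<in>F. Sf c)"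
    using compactE_image[OF K, of K Sf] BSL by blast
  define ch where "ch z = (\<Sum>x\<in>F. B x z)" for z
  define L where "L = (\<Union>x\<in>F. Lf x)"
  have "smooth_fun At ch" unfolding ch_def using BSL F(2) by (intro smooth_fun_sum[OF atlas]) auto
  moreover have "\<forall>z. ch z \<ge> 0" unfolding ch_def
  proof
    fix z
    have "\<forall>x. B x z \<ge> 0" using BSL by blast
    then show "0 \<le> (\<Sum>x\<in>F. B x z)" by (simp add: sum_nonneg)
  qed
  moreover have "\<forall>k\<in>K. ch k > 0"
  proof
    fix k assume "k \<in> K"
    then obtain x where x: "x \<in> F" "k \<in> Sf x" using F by blast
    have "0 < B x k" using BSL x by blast
    also have "\<dots> \<le> ch k" unfolding ch_def using BSL x F(2) by (intro member_le_sum) auto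
    finally show "ch k > 0" .
  qed
  moreover have "compact L" unfolding L_def using BSL F(2) by (intro compact_UN) auto
  moreover have "\<forall>z. z \<notin> L \<longrightarrow> ch z = 0" unfolding ch_def L_def using BSL by simp
  ultimately show ?thesis by blast
qed

end



section \<open>Projections\<close>

context
  fixes E1 E2 :: "(real^'p::finite) set"
  assumes cp: "complementary E1 E2"
begin

lemma proj_unique: "u \<in> E1 \<Longrightarrow> v - u \<in> E2 \<Longrightarrow> proj E1 E2 v = u"
  unfolding proj_def
proof (rule the_equality)
  show "u \<in> E1 \<and> v - u \<in> E2" if "u \<in> E1" "v - u \<in> E2" using that by simp
  fix u' assume a: "u \<in> E1" "v - u \<in> E2" "u' \<in> E1 \<and> v - u' \<in> E2"
  have s: "subspace E1" "subspace E2" "E1 \<inter> E2 = {0}" using cp unfolding complementary_def by auto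
  have "u' - u \<in> E1" by (rule subspace_diff[OF s(1)]) (use a in auto)
  moreover have "u' - u \<in> E2"
  proof -
    have "(v - u) - (v - u') \<in> E2" by (rule subspace_diff[OF s(2)]) (use a in auto)
    then show ?thesis by (simp add: algebra_simps)
  qed
  ultimately have "u' - u \<in> E1 \<inter> E2" by blast
  then show "u' = u" using s(3) by simp
qed

lemma proj_in: "proj E1 E2 v \<in> E1" "v - proj E1 E2 v \<in> E2"
proof -
  have "v \<in> {u + w | u w. u \<in> E1 \<and> w \<in> E2}" using cp unfolding complementary_def by auto
  then obtain u w where uw: "u \<in> E1" "w \<in> E2" "v = u + w" by auto
  then have "proj E1 E2 v = u" by (intro proj_unique) auto
  then show "proj E1 E2 v \<in> E1" "v - proj E1 E2 v \<in> E2" using uw by auto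
qed

lemma proj_add: "proj E1 E2 (v + w) = proj E1 E2 v + proj E1 E2 w"
proof (rule proj_unique)
  have s: "subspace E1" "subspace E2" using cp unfolding complementary_def by auto
  show "proj E1 E2 v + proj E1 E2 w \<in> E1" by (rule subspace_add[OF s(1) proj_in(1) proj_in(1)])
  have "(v - proj E1 E2 v) + (w - proj E1 E2 w) \<in> E2" by (rule subspace_add[OF s(2) proj_in(2) proj_in(2)])
  then show "v + w - (proj E1 E2 v + proj E1 E2 w) \<in> E2" by (simp add: algebra_simps)
qed

lemma proj_scale: "proj E1 E2 (c *\<^sub>R v) = c *\<^sub>R proj E1 E2 v"
proof (rule proj_unique)
  have s: "subspace E1" "subspace E2" using cp unfolding complementary_def by auto
  show "c *\<^sub>R proj E1 E2 v \<in> E1" using subspace_scale[OF s(1) proj_in(1)] by simp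
  have "c *\<^sub>R (v - proj E1 E2 v) \<in> E2" using subspace_scale[OF s(2) proj_in(2)] by simp
  then show "c *\<^sub>R v - c *\<^sub>R proj E1 E2 v \<in> E2" by (simp add: algebra_simps)
qed

lemma linear_P2: "linear (\<lambda>v. v - proj E1 E2 v)"
  by (rule linearI) (simp_all add: proj_add proj_scale algebra_simps)

lemma bounded_linear_P2: "bounded_linear (\<lambda>v. v - proj E1 E2 v)"
  using linear_P2 linear_conv_bounded_linear by blast

lemma proj_matrix:
  assumes "(\<lambda>v. A *v v) ` E1 = E1" "(\<lambda>v. A *v v) ` E2 = E2"
  shows "proj E1 E2 (A *v v) = A *v proj E1 E2 v"
proof (rule proj_unique)
  show "A *v proj E1 E2 v \<in> E1" using assms(1) proj_in by blast
  have "A *v (v - proj E1 E2 v) \<in> E2" using assms(2) proj_in by blast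
  then show "A *v v - A *v proj E1 E2 v \<in> E2" by (simp add: matrix_vector_mult_diff_distrib)
qed

end

section \<open>Matrices\<close>

lemma mvneg: "(A::real^'n^'m) *v (- x) = - (A *v x)"
  by (metis diff_0 matrix_vector_mult_diff_distrib matrix_vector_mult_0_right)

lemma matrix_inv_props: "invertible (A::real^'n^'n) \<Longrightarrow> A ** matrix_inv A = mat 1 \<and> matrix_inv A ** A = mat 1"
  unfolding matrix_inv_def invertible_def by (rule someI_ex)

lemma inv_unique: "(M::real^'n^'n) ** X = mat 1 \<Longrightarrow> Y ** M = mat 1 \<Longrightarrow> X = Y"
  by (metis matrix_mul_assoc matrix_mul_lid matrix_mul_rid)

lemma matrix_inv_prod:
  assumes "invertible (A::real^'n^'n)" "invertible (B::real^'n^'n)"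
  shows "A ** matrix_inv (B ** A) = matrix_inv B"
proof -
  have ia: "A ** matrix_inv A = mat 1" "matrix_inv A ** A = mat 1" using matrix_inv_props[OF assms(1)] by auto
  have ib: "B ** matrix_inv B = mat 1" "matrix_inv B ** B = mat 1" using matrix_inv_props[OF assms(2)] by auto
  have x: "(B ** A) ** (matrix_inv A ** matrix_inv B) = mat 1"
    by (metis ia(1) ib(1) matrix_mul_assoc matrix_mul_rid)
  have y: "(matrix_inv A ** matrix_inv B) ** (B ** A) = mat 1"
    by (metis ia(2) ib(2) matrix_mul_assoc matrix_mul_rid)
  have inv: "invertible (B ** A)" using x y unfolding invertible_def by blast
  have "matrix_inv (B ** A) = matrix_inv A ** matrix_inv B"
    using inv_unique[OF x] matrix_inv_props[OF inv] by metis
  then show ?thesis by (metis ia(1) matrix_mul_assoc matrix_mul_lid)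
qed

section \<open>Composition of triples\<close>

lemma tcomp_assoc: "tcomp (tcomp T S) R = tcomp T (tcomp S R)"
  by (cases T, cases S, cases R) (simp add: tcomp_def matrix_mul_assoc matrix_vector_mul_assoc[symmetric]
      matrix_vector_right_distrib o_def add.assoc)

lemma tcomp_tid: "tcomp T tid = T"
  by (cases T) (simp add: tcomp_def tid_def o_def)

lemma tcomp_tinv_r: "T = (A,f,\<phi>) \<Longrightarrow> invertible A \<Longrightarrow> bij \<phi> \<Longrightarrow> tcomp T (tinv T) = tid"
  by (simp add: tcomp_def tinv_def tid_def matrix_inv_props matrix_vector_mul_assoc bij_is_surj surj_iff_all
      mvneg fun_eq_iff bij_inv_eq_iff surj_f_inv_f)

lemma tcomp_tinv_l: "T = (A,f,\<phi>) \<Longrightarrow> invertible A \<Longrightarrow> bij \<phi> \<Longrightarrow> tcomp (tinv T) T = tid"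
  by (simp add: tcomp_def tinv_def tid_def matrix_inv_props bij_is_inj inv_o_cancel fun_eq_iff)



lemma tcomp_parts: "fst (tcomp R T) = fst R ** fst T"
  "fst (snd (tcomp R T)) = (\<lambda>x. fst R *v fst (snd T) x + fst (snd R) (snd (snd T) x))"
  "snd (snd (tcomp R T)) = snd (snd R) \<circ> snd (snd T)"
  by (cases R, cases T, simp add: tcomp_def)+

lemma tinv_parts: "snd (snd (tinv T)) = inv (snd (snd T))"
  by (cases T) (simp add: tinv_def)

lemma lf_sum_smooth:
  fixes At :: "('c::topological_space set \<times> ('c \<Rightarrow> real^'n)) set"
    and tm :: "'t \<Rightarrow> 'c \<Rightarrow> 'v::real_normed_vector"
  assumes atlas: "smooth_atlas At"
  and lf: "\<And>x0. \<exists>W F0. open W \<and> x0 \<in> W \<and> finite F0 \<and> F0 \<subseteq> G \<and> (\<forall>x\<in>W. Fs x \<subseteq> F0)"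
  and sm: "\<And>T. T \<in> G \<Longrightarrow> smooth_fun At (tm T)"
  and z: "\<And>T x. T \<in> G \<Longrightarrow> T \<notin> Fs x \<Longrightarrow> tm T x = 0"
  shows "smooth_fun At (\<lambda>x. \<Sum>T\<in>Fs x. tm T x)"
proof (rule smooth_fun_local[OF atlas])
  fix x0
  obtain W F0 where W: "open W" "x0 \<in> W" "finite F0" "F0 \<subseteq> G" "\<forall>x\<in>W. Fs x \<subseteq> F0"
    using lf[of x0] by metis
  have sm0: "smooth_fun At (\<lambda>x. \<Sum>T\<in>F0. tm T x)"
  proof (rule smooth_fun_sum[OF atlas W(3)])
    fix T assume "T \<in> F0" then show "smooth_fun At (tm T)" using sm W(4) by (simp add: subset_iff)
  qed
  have eq: "\<forall>x\<in>W. (\<Sum>T\<in>Fs x. tm T x) = (\<Sum>T\<in>F0. tm T x)"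
  proof
    fix x assume "x \<in> W"
    show "(\<Sum>T\<in>Fs x. tm T x) = (\<Sum>T\<in>F0. tm T x)"
    proof (rule sum.mono_neutral_left[OF W(3)])
      show "Fs x \<subseteq> F0" using W(5) \<open>x \<in> W\<close> by blast
      show "\<forall>i\<in>F0 - Fs x. tm i x = 0" using z W(4) by blast
    qed
  qed
  show "\<exists>W h. open W \<and> x0 \<in> W \<and> smooth_fun At h \<and> (\<forall>y\<in>W. (\<Sum>T\<in>Fs y. tm T y) = h y)"
    by (rule exI[of _ W], rule exI[of _ "\<lambda>x. \<Sum>T\<in>F0. tm T x"]) (use W(1,2) sm0 eq in simp)
qed

theorem mainTheorem16:
  fixes At :: "('c::{t2_space, second_countable_topology} set \<times> ('c \<Rightarrow> real^'n)) set"
    and E1 E2 :: "(real^'p) set"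
    and q :: nat
    and \<Omega> :: "('p,'c) baut set set"
    and \<iota> :: "('p,'c) baut set \<Rightarrow> ('p,'c) baut"
  assumes p_ge2: "CARD('p) \<ge> 2"
    and decomp: "complementary E1 E2"
    and dimE1: "dim E1 = q" and q_ge1: "1 \<le> q" and q_le_p: "q \<le> CARD('p)"
    and manifold: "smooth_atlas At"
    and simply_conn: "simply_connected (UNIV :: 'c set)"
    and subgroup: "is_subgroupT At E1 E2 \<Omega>"
    and discrete: "discrete_aut \<Omega>"
    and H_i_proper: "proper_action \<Omega>"
    and H_i_cocompact: "cocompact_action \<Omega>"
    and H_ii: "\<forall>\<omega>\<in>\<Omega>. (\<lambda>v. linpart \<omega> *v v) ` E1 = E1 \<and> (\<lambda>v. linpart \<omega> *v v) ` E2 = E2"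
    and H_iii: "\<exists>g. scalar_product_on E1 g \<and> (\<forall>\<omega>\<in>\<Omega>. similarity_on E1 g (linpart \<omega>)) \<and>
                  (\<exists>\<omega>\<in>\<Omega>. \<not> isometry_on E1 g (linpart \<omega>))"
    and H_iv: "\<forall>\<omega>\<in>\<Omega>. \<forall>x. \<omega> \<noteq> Pcls tid \<and> resC \<omega> x = x \<longrightarrow>
                  (\<forall>T\<in>\<omega>. \<forall>a. bmap T (a, x) \<noteq> (a, x))"
    and free: "\<forall>\<omega>\<in>\<Omega>. \<forall>x. resC \<omega> x = x \<longrightarrow> \<omega> = Pcls tid"
    and iota_section: "\<forall>\<omega>\<in>\<Omega>. \<iota> \<omega> \<in> \<omega>"
    and tilde_subgroup: "tid \<in> \<iota> ` \<Omega>"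
       "\<forall>T1\<in>\<iota> ` \<Omega>. \<forall>T2\<in>\<iota> ` \<Omega>. tcomp T1 T2 \<in> \<iota> ` \<Omega>"
       "\<forall>T\<in>\<iota> ` \<Omega>. tinv T \<in> \<iota> ` \<Omega>"
  shows "\<exists>s :: 'c \<Rightarrow> real^'p. smooth_fun At s \<and> (\<forall>x. s x \<in> E2) \<and>
           (\<forall>\<omega>\<in>\<Omega>. \<exists>c\<in>E1. \<forall>a x.
              ((\<lambda>(b, y). (b - s y, y)) \<circ> bmap (\<iota> \<omega>) \<circ> (\<lambda>(b, y). (b + s y, y))) (a, x)
                = (linpart \<omega> *v a + c, resC \<omega> x))"
proof -
  define G where "G = \<iota> ` \<Omega>"
  have struct: "\<exists>A f \<phi>. \<iota> \<omega> = (A,f,\<phi>) \<and> invertible A \<and> smooth_fun At f \<and> diffeo At \<phi> \<and>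
      (\<exists>c. \<forall>x. proj E1 E2 (f x) = c) \<and> linpart \<omega> = A \<and> resC \<omega> = \<phi>" if w: "\<omega> \<in> \<Omega>" for \<omega>
  proof -
    have sub: "\<Omega> \<subseteq> autT At E1 E2" using subgroup unfolding is_subgroupT_def by (rule conjunct1)
    have "\<omega> \<in> Pcls ` {T. autZ At E1 E2 T}" using subsetD[OF sub w] unfolding autT_def .
    then obtain T0 where T0: "\<omega> = Pcls T0" "T0 \<in> {T. autZ At E1 E2 T}" by (rule imageE)
    obtain A0 f0 \<phi>0 where T0e: "T0 = (A0,f0,\<phi>0)" by (cases T0)
    have az: "GLZ A0" "smooth_fun At f0" "diffeo At \<phi>0" "\<exists>c. \<forall>x. proj E1 E2 (f0 x) = c"
      using T0(2) unfolding T0e autZ_def by simp_all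
    have cls: "\<omega> = {(A0, \<lambda>x. f0 x + k, \<phi>0) | k. k \<in> Zvec}" using T0(1) T0e by (simp add: Pcls_def)
    have mem: "\<exists>k. T = (A0, \<lambda>x. f0 x + k, \<phi>0)" if "T \<in> \<omega>" for T
    proof -
      have "T \<in> {(A0, \<lambda>x. f0 x + k, \<phi>0) | k. k \<in> Zvec}" using that cls by simp
      then show ?thesis by (simp only: mem_Collect_eq) (elim exE conjE, rule exI, assumption)
    qed
    obtain k where k: "\<iota> \<omega> = (A0, \<lambda>x. f0 x + k, \<phi>0)" using mem[OF iota_section[rule_format, OF w]] by (elim exE)
    have "(SOME T. T \<in> \<omega>) \<in> \<omega>" using iota_section[rule_format, OF w] by (rule someI)
    then obtain k' where k': "(SOME T. T \<in> \<omega>) = (A0, \<lambda>x. f0 x + k', \<phi>0)" using mem by blast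
    have lp: "linpart \<omega> = A0" "resC \<omega> = \<phi>0" unfolding linpart_def resC_def k' by simp_all
    obtain c where c: "\<forall>x. proj E1 E2 (f0 x) = c" using az(4) by (elim exE)
    have "\<forall>x. proj E1 E2 (f0 x + k) = c + proj E1 E2 k" using c proj_add[OF decomp] by simp
    moreover have "smooth_fun At (\<lambda>x. f0 x + k)" using smooth_fun_add[OF manifold az(2) smooth_fun_const[OF manifold]] .
    moreover have "invertible A0" using az(1) unfolding GLZ_def by simp
    ultimately show ?thesis using k lp az(3) by (intro exI[of _ A0] exI[of _ "\<lambda>x. f0 x + k"] exI[of _ \<phi>0]) auto
  qed
  have GT: "invertible (fst T) \<and> smooth_fun At (fst (snd T)) \<and> diffeo At (snd (snd T))" if TG: "T \<in> G" for T
  proof -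
    obtain \<omega> where w: "\<omega> \<in> \<Omega>" "T = \<iota> \<omega>" using TG G_def by blast
    obtain A f \<phi> where "\<iota> \<omega> = (A,f,\<phi>)" "invertible A" "smooth_fun At f" "diffeo At \<phi>"
      using struct[OF w(1)] by metis
    then show ?thesis using w(2) by simp
  qed
  have Gcomp: "tcomp R T \<in> G" if "R \<in> G" "T \<in> G" for R T using tilde_subgroup(2) that G_def by blast
  have Ginv: "tinv T \<in> G" if "T \<in> G" for T using tilde_subgroup(3) that G_def by blast
  obtain K where K: "compact K" "(\<Union>\<omega>\<in>\<Omega>. resC \<omega> ` K) = UNIV"
    using H_i_cocompact unfolding cocompact_action_def by blast
  obtain ch :: "'c \<Rightarrow> real" and L where ch: "smooth_fun At ch" "\<forall>z. ch z \<ge> 0" "\<forall>k\<in>K. ch k > 0"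
     "compact L" "\<forall>z. z \<notin> L \<longrightarrow> ch z = 0"
    using chi_exists[OF manifold K(1)] by blast
  define Fs where "Fs x = {T \<in> G. ch (snd (snd T) x) \<noteq> 0}" for x
  have lf: "\<exists>W F0. open W \<and> x0 \<in> W \<and> finite F0 \<and> F0 \<subseteq> G \<and> (\<forall>x\<in>W. Fs x \<subseteq> F0)" for x0
  proof -
    obtain W Wc where W: "open W" "compact Wc" "x0 \<in> W" "W \<subseteq> Wc" using loc_compact[OF manifold, of x0] by metis
    define K' where "K' = Wc \<union> L"
    have cK': "compact K'" using W(2) ch(4) K'_def by (simp add: compact_Un)
    define Q where "Q = {\<omega>\<in>\<Omega>. resC \<omega> ` K' \<inter> K' \<noteq> {}}"
    have fQ: "finite Q" using H_i_proper cK' unfolding proper_action_def Q_def by simp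
    have sub: "Fs x \<subseteq> \<iota> ` Q" if xW: "x \<in> W" for x
    proof
      fix T assume "T \<in> Fs x"
      then have TG: "T \<in> G" and nz: "ch (snd (snd T) x) \<noteq> 0" by (auto simp: Fs_def)
      obtain \<omega> where w: "\<omega> \<in> \<Omega>" "T = \<iota> \<omega>" using TG G_def by blast
      obtain A f \<phi> where e: "\<iota> \<omega> = (A,f,\<phi>)" "resC \<omega> = \<phi>" using struct[OF w(1)] by metis
      have "\<phi> x \<in> L" using nz ch(5) w(2) e(1) by auto
      moreover have "x \<in> K'" using xW W(4) K'_def by auto
      ultimately have "\<phi> x \<in> resC \<omega> ` K' \<inter> K'" using e(2) K'_def by auto
      then have "\<omega> \<in> Q" using w(1) Q_def by auto
      then show "T \<in> \<iota> ` Q" using w(2) by simp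
    qed
    have "\<iota> ` Q \<subseteq> G" unfolding G_def Q_def by auto
    then show ?thesis using W(1,3) fQ sub by (intro exI[of _ W] exI[of _ "\<iota> ` Q"]) simp
  qed
  have finF: "finite (Fs x)" for x
  proof -
    obtain W F0 where "open W" "x \<in> W" "finite F0" "\<forall>x\<in>W. Fs x \<subseteq> F0" using lf[of x] by metis
    then show ?thesis by (meson finite_subset)
  qed
  define S where "S x = (\<Sum>T\<in>Fs x. ch (snd (snd T) x))" for x
  define N where "N x = (\<Sum>T\<in>Fs x. ch (snd (snd T) x) *\<^sub>R (matrix_inv (fst T) *v fst (snd T) x))" for x
  have chT: "smooth_fun At (\<lambda>x. ch (snd (snd T) x))" if "T \<in> G" for T
    using smooth_fun_comp_map[OF manifold ch(1)] GT[OF that] unfolding diffeo_def by blast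
  have smS: "smooth_fun At S" unfolding S_def
  proof (rule lf_sum_smooth[OF manifold lf])
    show "smooth_fun At (\<lambda>x. ch (snd (snd T) x))" if "T \<in> G" for T using chT[OF that] .
    show "ch (snd (snd T) x) = 0" if "T \<in> G" "T \<notin> Fs x" for T x using that Fs_def by auto
  qed
  have smN: "smooth_fun At N" unfolding N_def
  proof (rule lf_sum_smooth[OF manifold lf])
    show "smooth_fun At (\<lambda>x. ch (snd (snd T) x) *\<^sub>R (matrix_inv (fst T) *v fst (snd T) x))" if "T \<in> G" for T
      by (rule smooth_fun_scaleR[OF manifold chT[OF that] smooth_fun_linear[OF manifold matrix_vector_mul_bounded_linear]])
         (use GT[OF that] in simp)
    show "ch (snd (snd T) x) *\<^sub>R (matrix_inv (fst T) *v fst (snd T) x) = 0" if "T \<in> G" "T \<notin> Fs x" for T x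
      using that Fs_def by auto
  qed
  have Spos: "S x > 0" for x
  proof -
    have "x \<in> (\<Union>\<omega>\<in>\<Omega>. resC \<omega> ` K)" using K(2) by simp
    then obtain \<omega> k where wk: "\<omega> \<in> \<Omega>" "k \<in> K" "x = resC \<omega> k" by blast
    obtain A f \<phi> where e: "\<iota> \<omega> = (A,f,\<phi>)" "resC \<omega> = \<phi>" "diffeo At \<phi>" using struct[OF wk(1)] by metis
    have bij: "bij \<phi>" using e(3) unfolding diffeo_def by simp
    define T' where "T' = tinv (\<iota> \<omega>)"
    have T'G: "T' \<in> G" unfolding T'_def using Ginv wk(1) G_def by blast
    have "snd (snd T') x = k" unfolding T'_def tinv_parts e(1) using wk(3) e(2) bij
      by (simp add: bij_is_inj)
    then have pos: "ch (snd (snd T') x) > 0" using ch(3) wk(2) by simp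
    then have "T' \<in> Fs x" using T'G Fs_def by auto
    then have "ch (snd (snd T') x) \<le> S x" unfolding S_def
      by (rule member_le_sum[OF _ _ finF]) (use ch(2) in simp)
    then show ?thesis using pos by simp
  qed
  have equiv: "S (\<phi> x) = S x \<and> N (\<phi> x) = A *v N x - S x *\<^sub>R f x"
    if w: "\<omega> \<in> \<Omega>" and e: "\<iota> \<omega> = (A,f,\<phi>)" for \<omega> A f \<phi> x
  proof -
    define T0 where "T0 = \<iota> \<omega>"
    have T0G: "T0 \<in> G" using w T0_def G_def by simp
    have T0e: "T0 = (A,f,\<phi>)" using e T0_def by simp
    have phT0: "snd (snd T0) = \<phi>" using T0e by simp
    have invA: "invertible A" and bij: "bij \<phi>" using GT[OF T0G] T0e unfolding diffeo_def by auto
    have r1: "tcomp (tcomp a T0) (tinv T0) = a" for a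
      by (simp add: tcomp_assoc tcomp_tinv_r[OF T0e invA bij] tcomp_tid)
    have r2: "tcomp (tcomp b (tinv T0)) T0 = b" for b
      by (simp add: tcomp_assoc tcomp_tinv_l[OF T0e invA bij] tcomp_tid)
    have m1: "tcomp a T0 \<in> Fs x" if "a \<in> Fs (\<phi> x)" for a
      using that Gcomp[OF _ T0G] by (simp add: Fs_def tcomp_parts T0e)
    have m2: "tcomp b (tinv T0) \<in> Fs (\<phi> x)" if "b \<in> Fs x" for b
      using that Gcomp[OF _ Ginv[OF T0G]] bij by (simp add: Fs_def tcomp_parts tinv_parts T0e bij_is_inj)
    have eS: "S (\<phi> x) = S x" unfolding S_def
      by (rule sum.reindex_bij_witness[where j="\<lambda>R. tcomp R T0" and i="\<lambda>D. tcomp D (tinv T0)"])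
         (simp_all add: r1 r2 m1 m2 tcomp_parts phT0)
    have eN1: "N (\<phi> x) = (\<Sum>D\<in>Fs x. A *v (ch (snd (snd D) x) *\<^sub>R (matrix_inv (fst D) *v fst (snd D) x))
                    - ch (snd (snd D) x) *\<^sub>R f x)" unfolding N_def
    proof (rule sum.reindex_bij_witness[where j="\<lambda>R. tcomp R T0" and i="\<lambda>D. tcomp D (tinv T0)"])
      fix a assume aF: "a \<in> Fs (\<phi> x)"
      show "tcomp (tcomp a T0) (tinv T0) = a" by (rule r1)
      show "tcomp a T0 \<in> Fs x" using m1[OF aF] .
      have aG: "a \<in> G" using aF Fs_def by simp
      have invB: "invertible (fst a)" using GT[OF aG] by simp
      have key: "A ** (matrix_inv (fst a ** A) ** fst a) = mat 1"
        by (metis matrix_inv_prod[OF invA invB] matrix_inv_props[OF invB] matrix_mul_assoc)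
      show "A *v (ch (snd (snd (tcomp a T0)) x) *\<^sub>R (matrix_inv (fst (tcomp a T0)) *v fst (snd (tcomp a T0)) x))
              - ch (snd (snd (tcomp a T0)) x) *\<^sub>R f x
            = ch (snd (snd a) (\<phi> x)) *\<^sub>R (matrix_inv (fst a) *v fst (snd a) (\<phi> x))"
        by (simp add: tcomp_parts T0e matrix_vector_mult_scaleR matrix_vector_mul_assoc
             matrix_inv_prod[OF invA invB] matrix_vector_right_distrib matrix_inv_props[OF invB] key algebra_simps)
    next
      fix b assume "b \<in> Fs x"
      then show "tcomp (tcomp b (tinv T0)) T0 = b" "tcomp b (tinv T0) \<in> Fs (\<phi> x)" using r2 m2 by auto
    qed
    have eN2: "(\<Sum>D\<in>Fs x. A *v (ch (snd (snd D) x) *\<^sub>R (matrix_inv (fst D) *v fst (snd D) x))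
                    - ch (snd (snd D) x) *\<^sub>R f x) = A *v N x - S x *\<^sub>R f x"
      unfolding N_def S_def
      by (simp add: sum_subtractf scaleR_sum_left linear_sum[OF matrix_vector_mul_linear] o_def)
    show ?thesis using eS eN1 eN2 by simp
  qed
  define st where "st x = - (inverse (S x)) *\<^sub>R N x" for x
  define s where "s x = st x - proj E1 E2 (st x)" for x
  have smInv: "smooth_fun At (\<lambda>x. inverse (S x))"
    by (rule smooth_fun_Ck[OF manifold open_greaterThan Ck_inverse smS]) (use Spos in auto)
  have smst: "smooth_fun At st" unfolding st_def
    by (rule smooth_fun_scaleR[OF manifold smooth_fun_linear[OF manifold bounded_linear_minus[OF bounded_linear_ident] smInv] smN])
  have sms: "smooth_fun At s" unfolding s_def
    by (rule smooth_fun_linear[OF manifold bounded_linear_P2[OF decomp] smst])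
  have sE2: "\<forall>x. s x \<in> E2" unfolding s_def using proj_in(2)[OF decomp] by simp
  have main: "\<exists>c\<in>E1. \<forall>a x. ((\<lambda>(b, y). (b - s y, y)) \<circ> bmap (\<iota> \<omega>) \<circ> (\<lambda>(b, y). (b + s y, y))) (a, x)
                = (linpart \<omega> *v a + c, resC \<omega> x)" if w: "\<omega> \<in> \<Omega>" for \<omega>
  proof -
    obtain A f \<phi> where e: "\<iota> \<omega> = (A,f,\<phi>)" "linpart \<omega> = A" "resC \<omega> = \<phi>" "\<exists>c. \<forall>x. proj E1 E2 (f x) = c"
      using struct[OF w] by metis
    obtain c where c: "\<forall>x. proj E1 E2 (f x) = c" using e(4) by (elim exE)
    have cE1: "c \<in> E1" using c proj_in(1)[OF decomp] by metis
    have hA: "(\<lambda>v. A *v v) ` E1 = E1" "(\<lambda>v. A *v v) ` E2 = E2" using bspec[OF H_ii w] e(2) by simp_all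
    have st_eq: "st (\<phi> x) = A *v st x + f x" for x
    proof -
      have eq: "S (\<phi> x) = S x" "N (\<phi> x) = A *v N x - S x *\<^sub>R f x" using equiv[OF w e(1)] by auto
      have "S x \<noteq> 0" using Spos[of x] by simp
      then show ?thesis unfolding st_def eq
        by (simp add: matrix_vector_mult_scaleR mvneg algebra_simps)
    qed
    have s_eq: "s (\<phi> x) = A *v s x + f x - c" for x
      unfolding s_def st_eq using c proj_add[OF decomp] proj_matrix[OF decomp hA]
      by (simp add: matrix_vector_mult_diff_distrib algebra_simps)
    show ?thesis
    proof (intro bexI[OF _ cE1] allI)
      fix a x
      show "((\<lambda>(b, y). (b - s y, y)) \<circ> bmap (\<iota> \<omega>) \<circ> (\<lambda>(b, y). (b + s y, y))) (a, x)
                = (linpart \<omega> *v a + c, resC \<omega> x)"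
        using s_eq[of x] by (simp add: bmap_def e(1,2,3) matrix_vector_right_distrib algebra_simps)
    qed
  qed
  show ?thesis using sms sE2 main by blast
qed


end
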